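(* For every $\delta>0$, every $k\ge 1$ and every $j\in\omega$ there is $N_0$ such that for every $N\ge N_0$ and every $j$ collections $\mathcal{A}_0,\dots,\mathcal{A}_{j-1}\subseteq\mathcal{P}(N)$, each $k$-large in $N$ and upward closed, there exists $Z\subseteq N$ with $|Z|<(1/k+\delta)N$ and $Z\in\bigcap_{j'<j}\mathcal{A}_{j'}$.
   Context: Identify $N$ with $\{0,\dots,N-1\}$. A collection $\mathcal{A}\subseteq\mathcal{P}(N)$ is $k$-large in $N$ if for every partition of $N$ into $k$ pieces $N_0,\dots,N_{k-1}$ there is $i<k$ with $N_i\in\mathcal{A}$. $\mathcal{A}$ is upward closed if $B\in\mathcal{A}$ and $B\subseteq A\subseteq N$ imply $A\in\mathcal{A}$. *)

theory Defs
  imports Main Complex_Main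
begin

text \<open>N is identified with {0..<N}. A partition of N into k (possibly empty) pieces
  N_0,...,N_{k-1} is given by a colouring c with c x < k for x < N; N_i = {x<N. c x = i}.\<close>

definition k_large :: "nat \<Rightarrow> nat \<Rightarrow> nat set set \<Rightarrow> bool" where
  "k_large k N \<A> \<longleftrightarrow>
     (\<forall>c :: nat \<Rightarrow> nat. (\<forall>x<N. c x < k) \<longrightarrow> (\<exists>i<k. {x\<in>{0..<N}. c x = i} \<in> \<A>))"

definition upward_closed :: "nat \<Rightarrow> nat set set \<Rightarrow> bool" where
  "upward_closed N \<A> \<longleftrightarrow> (\<forall>B A. B \<in> \<A> \<and> B \<subseteq> A \<and> A \<subseteq> {0..<N} \<longrightarrow> A \<in> \<A>)"

end

theory Submission
  imports Defs "HOL-Library.Ramsey" "HOL-Library.FuncSet"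
begin

definition mpos :: "nat \<Rightarrow> nat list \<Rightarrow> nat" where
  "mpos K w = (LEAST i. i < length w \<and> w!i < K)"

definition Qp :: "nat \<Rightarrow> nat list \<Rightarrow> bool" where
  "Qp K w \<longleftrightarrow> (\<forall>i<length w. K \<le> w!i) \<or> mpos K w < K \<or> (mpos K w + w!(mpos K w)) mod K = 0"

lemma word_cover:
  assumes K: "K \<ge> 1" and len: "length W = L + K - 1"
  shows "\<exists>l<K. Qp K (take L (drop l W))"
proof (cases "Qp K (take L W)")
  case True
  then show ?thesis using K by (intro exI[of _ 0]) auto
next
  case False
  define v where "v = take L W"
  have lv: "length v = L" using len K by (simp add: v_def)
  from False obtain i where i: "i < L" "v!i < K"
    unfolding Qp_def v_def[symmetric] using lv by auto
  define p where "p = mpos K v"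
  have pL0: "p < length v \<and> v!p < K" unfolding p_def mpos_def
    by (rule LeastI[of "\<lambda>i. i < length v \<and> v!i < K" i]) (use i lv in auto)
  have pL: "p < L \<and> v!p < K" using pL0 lv by simp
  have pmin: "\<And>t. t < p \<Longrightarrow> K \<le> v!t"
  proof -
    fix t assume "t < p"
    then have "\<not> (t < length v \<and> v!t < K)" unfolding p_def mpos_def by (rule not_less_Least)
    then show "K \<le> v!t" using \<open>t < p\<close> pL lv by auto
  qed
  have pK: "p \<ge> K" and res: "(p + v!p) mod K \<noteq> 0"
    using False unfolding Qp_def v_def[symmetric] p_def by auto
  have vW: "\<And>t. t < L \<Longrightarrow> v!t = W!t" unfolding v_def by simp
  define l where "l = (p + v!p) mod K"
  have lK: "l < K" using K by (simp add: l_def)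
  have lp: "l \<le> p" using lK pK by simp
  define u where "u = take L (drop l W)"
  have lu: "length u = L" using len lK by (simp add: u_def)
  have uW: "\<And>t. t < L \<Longrightarrow> u!t = W!(l+t)" using len lK by (simp add: u_def)
  have up: "u!(p-l) = v!p" proof -
    have "p - l < L" using pL by linarith
    then have "u!(p-l) = W!(l + (p-l))" by (rule uW)
    also have "l + (p - l) = p" using lp by simp
    finally show ?thesis using vW[of p] pL by simp
  qed
  have umin: "\<And>t. t < p - l \<Longrightarrow> K \<le> u!t"
  proof -
    fix t assume t: "t < p - l"
    then have "t < L" "l + t < p" "l + t < L" using pL by linarith+
    then show "K \<le> u!t" using uW[of t] vW[of "l+t"] pmin[of "l+t"] by simp
  qed
  have mu: "mpos K u = p - l" unfolding mpos_def
  proof (rule Least_equality)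
    show "p - l < length u \<and> u ! (p - l) < K" using up pL lu by auto
  next
    fix y assume "y < length u \<and> u ! y < K"
    then show "p - l \<le> y" using umin by (meson leD not_le_imp_less)
  qed
  have "(p - l + v!p) mod K = 0"
  proof -
    have "(p + v!p) = (p + v!p) div K * K + l" by (simp add: l_def)
    then have "p - l + v!p = (p + v!p) div K * K" using lp by linarith
    then show ?thesis by simp
  qed
  then have "Qp K u" unfolding Qp_def mu up by simp
  then show ?thesis using lK u_def by blast
qed


definition UU :: "nat \<Rightarrow> nat \<Rightarrow> (nat \<Rightarrow> nat) set" where
  "UU n q = PiE {..<n} (\<lambda>_. {..<q})"

lemma finite_UU: "finite (UU n q)"
  unfolding UU_def by (simp add: finite_PiE)

lemma card_UU: "card (UU n q) = q ^ n"
  unfolding UU_def by (simp add: card_PiE)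

lemma card_PiE_if:
  assumes "finite A" "B \<subseteq> A"
  shows "card (PiE A (\<lambda>b. if b \<in> B then X else Y)) = card X ^ card B * card Y ^ (card A - card B)"
proof -
  have "card (PiE A (\<lambda>b. if b \<in> B then X else Y)) = (\<Prod>b\<in>A. if b \<in> B then card X else card Y)"
    using assms by (simp add: card_PiE if_distrib)
  also have "\<dots> = (\<Prod>b\<in>A \<inter> {b. b\<in>B}. card X) * (\<Prod>b\<in>A \<inter> - {b. b \<in> B}. card Y)"
    using assms by (simp add: prod.If_cases)
  also have "A \<inter> {b. b\<in>B} = B" using assms by auto
  also have "A \<inter> - {b. b \<in> B} = A - B" by auto
  finally show ?thesis using assms by (simp add: card_Diff_subset finite_subset)
qed

lemma A1_card:
  assumes d: "distinct as" and sub: "set as \<subseteq> {..<n}" and Kq: "K \<le> q"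
  shows "card {S \<in> UU n q. \<forall>i<length as. K \<le> S (as!i)} = (q-K) ^ length as * q ^ (n - length as)"
proof -
  have "{S \<in> UU n q. \<forall>i<length as. K \<le> S (as!i)} = PiE {..<n} (\<lambda>b. if b \<in> set as then {K..<q} else {..<q})"
  proof (rule set_eqI, rule iffI)
    fix S assume S: "S \<in> {S \<in> UU n q. \<forall>i<length as. K \<le> S (as!i)}"
    show "S \<in> PiE {..<n} (\<lambda>b. if b \<in> set as then {K..<q} else {..<q})"
      using S unfolding UU_def PiE_iff by (auto simp: in_set_conv_nth)
  next
    fix S assume S: "S \<in> PiE {..<n} (\<lambda>b. if b \<in> set as then {K..<q} else {..<q})"
    have "S \<in> UU n q" using S unfolding UU_def PiE_iff by (auto split: if_splits)
    moreover have "\<forall>i<length as. K \<le> S (as!i)"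
    proof (intro allI impI)
      fix i assume "i < length as"
      then have "as!i \<in> set as" by simp
      then have "as!i \<in> set as" "as!i < n" using sub by auto
      moreover have "S (as!i) \<in> (if as!i \<in> set as then {K..<q} else {..<q})"
        using S \<open>as!i < n\<close> unfolding PiE_iff by blast
      ultimately show "K \<le> S (as!i)" by simp
    qed
    ultimately show "S \<in> {S \<in> UU n q. \<forall>i<length as. K \<le> S (as!i)}" by simp
  qed
  moreover have "card (set as) = length as" using d by (simp add: distinct_card)
  ultimately show ?thesis using card_PiE_if[of "{..<n}" "set as" "{K..<q}" "{..<q}"] sub by simp
qed

lemma B_card:
  assumes "a < n"
  shows "card {S \<in> UU n q. S a < K} = card (PiE {..<n} (\<lambda>b. if b \<in> {a} then {..<min K q} else {..<q}))"
proof -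
  have "{S \<in> UU n q. S a < K} = PiE {..<n} (\<lambda>b. if b \<in> {a} then {..<min K q} else {..<q})"
  proof (rule set_eqI, rule iffI)
    fix S assume S: "S \<in> {S \<in> UU n q. S a < K}"
    then have S1: "\<forall>b\<in>{..<n}. S b < q" and S2: "S \<in> extensional {..<n}" and S3: "S a < K"
      unfolding UU_def PiE_iff by auto
    show "S \<in> PiE {..<n} (\<lambda>b. if b \<in> {a} then {..<min K q} else {..<q})"
      unfolding PiE_iff
    proof (intro conjI ballI S2)
      fix b assume b: "b \<in> {..<n}"
      show "S b \<in> (if b \<in> {a} then {..<min K q} else {..<q})"
      proof (cases "b = a")
        case True then show ?thesis using S1 S3 b by simp
      next
        case False then show ?thesis using S1 b by simp
      qed
    qed
  next
    fix S assume S: "S \<in> PiE {..<n} (\<lambda>b. if b \<in> {a} then {..<min K q} else {..<q})"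
    then have S1: "\<forall>b\<in>{..<n}. S b \<in> (if b \<in> {a} then {..<min K q} else {..<q})"
      and S2: "S \<in> extensional {..<n}" unfolding PiE_iff by auto
    have "\<forall>b\<in>{..<n}. S b < q"
    proof
      fix b assume b: "b \<in> {..<n}"
      show "S b < q" using S1[rule_format, OF b] by (cases "b = a") auto
    qed
    moreover have "S a < K" using S1[rule_format, of a] assms by simp
    ultimately show "S \<in> {S \<in> UU n q. S a < K}" using S2 unfolding UU_def PiE_iff by auto
  qed
  then show ?thesis by simp
qed

lemma B_card2:
  assumes "a < n"
  shows "card {S \<in> UU n q. S a < K} \<le> K * q ^ (n - 1)"
proof -
  have "card {S \<in> UU n q. S a < K} = min K q * q ^ (n - 1)"
    using B_card[OF assms, of q K] card_PiE_if[of "{..<n}" "{a}" "{..<min K q}" "{..<q}"] assms by simp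
  then show ?thesis by (simp add: min_def)
qed


lemma mpos_props:
  assumes "\<exists>i<length w. w!i < K"
  shows "mpos K w < length w \<and> w!(mpos K w) < K \<and> (\<forall>t<mpos K w. K \<le> w!t)"
proof -
  from assms obtain i where i: "i < length w \<and> w!i < K" by blast
  have a: "mpos K w < length w \<and> w!(mpos K w) < K" unfolding mpos_def
    by (rule LeastI[of "\<lambda>i. i < length w \<and> w!i < K" i]) (use i in auto)
  have b: "K \<le> w!t" if "t < mpos K w" for t
  proof -
    have "\<not> (t < length w \<and> w!t < K)" using that unfolding mpos_def by (rule not_less_Least)
    then show ?thesis using that a by auto
  qed
  show ?thesis using a b by blast
qed

lemma mpos_eq:
  assumes "p < length w" "w!p < K" "\<forall>t<p. K \<le> w!t"
  shows "mpos K w = p"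
  unfolding mpos_def
proof (rule Least_equality)
  show "p < length w \<and> w ! p < K" using assms by auto
next
  fix y assume "y < length w \<and> w ! y < K"
  then show "p \<le> y" using assms by (meson leD not_le_imp_less)
qed

definition GG :: "nat \<Rightarrow> nat \<Rightarrow> nat \<Rightarrow> nat list \<Rightarrow> nat \<Rightarrow> (nat \<Rightarrow> nat) set" where
  "GG n q K as c = {S \<in> UU n q. (\<exists>i<length (map S as). map S as ! i < K) \<and>
      (mpos K (map S as) + map S as ! mpos K (map S as)) mod K = c}"

lemma mod_small_inj:
  fixes p a b K :: nat
  assumes "a < K" "b < K" "(p + a) mod K = (p + b) mod K"
  shows "a = b"
proof (rule ccontr)
  assume "a \<noteq> b"
  then consider "a < b" | "b < a" by linarith
  then show False
  proof cases
    case 1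
    then have "K dvd (p + b) - (p + a)" using assms(3) mod_eq_dvd_iff_nat[of "p+a" "p+b" K] by simp
    then have "K dvd b - a" by simp
    moreover have "0 < b - a" "b - a < K" using 1 assms by auto
    ultimately show False using nat_dvd_not_less by blast
  next
    case 2
    then have "K dvd (p + a) - (p + b)" using assms(3) mod_eq_dvd_iff_nat[of "p+b" "p+a" K] by simp
    then have "K dvd a - b" by simp
    moreover have "0 < a - b" "a - b < K" using 2 assms by auto
    ultimately show False using nat_dvd_not_less by blast
  qed
qed

lemma GG_card:
  assumes K: "1 \<le> K" "K \<le> q" and d: "distinct as" and sub: "set as \<subseteq> {..<n}"
  shows "K * card (GG n q K as 0) \<le> card (UU n q)"
proof -
  define L where "L = length as"
  define g where "g c S = S (as ! mpos K (map S as) := (S (as ! mpos K (map S as)) + c) mod K)" for c S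
  have key: "g c S \<in> GG n q K as c \<and> mpos K (map (g c S) as) = mpos K (map S as)"
    if S: "S \<in> GG n q K as 0" and c: "c < K" for S c
  proof -
    define p where "p = mpos K (map S as)"
    have SU: "S \<in> UU n q" and ex: "\<exists>i<length (map S as). map S as ! i < K"
      and r0: "(p + map S as ! p) mod K = 0"
      using S unfolding GG_def p_def by auto
    note mp = mpos_props[OF ex, folded p_def]
    have pL: "p < L" using mp L_def by simp
    have r: "(p + S (as!p)) mod K = 0" using r0 pL L_def by simp
    have asp: "as!p < n" using pL sub L_def nth_mem by blast
    have neq: "as!t \<noteq> as!p" if "t < p" for t using d pL that L_def nth_eq_iff_index_eq by fastforce
    have gval: "g c S = S (as!p := (S (as!p) + c) mod K)" by (simp add: g_def p_def)
    have gU: "g c S \<in> UU n q"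
    proof -
      have "(S (as!p) + c) mod K < K" using K(1) by simp
      then have "(S (as!p) + c) mod K < q" using K(2) by linarith
      then show ?thesis using SU asp unfolding gval UU_def PiE_iff extensional_def by auto
    qed
    have w1: "map (g c S) as ! p < K" using pL L_def K by (simp add: gval)
    have w2: "\<forall>t<p. K \<le> map (g c S) as ! t"
      using mp pL neq L_def by (auto simp: gval)
    have mp2: "mpos K (map (g c S) as) = p"
      by (rule mpos_eq) (use w1 w2 pL L_def in auto)
    have "(p + (S (as!p) + c) mod K) mod K = c"
    proof -
      have "(p + (S (as!p) + c) mod K) mod K = (p + S (as!p) + c) mod K"
        by (simp add: mod_add_right_eq add.assoc)
      also have "\<dots> = ((p + S (as!p)) mod K + c) mod K" by (simp add: mod_add_left_eq)
      also have "\<dots> = c" using r c by simp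
      finally show ?thesis .
    qed
    then have "(mpos K (map (g c S) as) + map (g c S) as ! mpos K (map (g c S) as)) mod K = c"
      using mp2 pL L_def by (simp add: gval)
    moreover have "\<exists>i<length (map (g c S) as). map (g c S) as ! i < K" using w1 pL L_def by auto
    ultimately show ?thesis using gU mp2 p_def unfolding GG_def by auto
  qed
  have inj: "inj_on (g c) (GG n q K as 0)" if c: "c < K" for c
  proof (rule inj_onI)
    fix S S' assume S: "S \<in> GG n q K as 0" and S': "S' \<in> GG n q K as 0" and e: "g c S = g c S'"
    define p where "p = mpos K (map S as)"
    have pp: "mpos K (map S' as) = p"
      using key[OF S c] key[OF S' c] e p_def by metis
    have ex: "\<exists>i<length (map S as). map S as ! i < K" and r0: "(p + map S as ! p) mod K = 0"
      using S unfolding GG_def p_def by auto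
    have ex': "\<exists>i<length (map S' as). map S' as ! i < K" and r0': "(p + map S' as ! p) mod K = 0"
      using S' pp unfolding GG_def by auto
    have pL: "p < L" using mpos_props[OF ex] p_def L_def by simp
    have r: "(p + S (as!p)) mod K = 0" using r0 pL L_def by simp
    have r': "(p + S' (as!p)) mod K = 0" using r0' pL L_def by simp
    have v: "S (as!p) < K" using mpos_props[OF ex] p_def pL L_def by simp
    have v': "S' (as!p) < K" using mpos_props[OF ex'] pp pL L_def by simp
    have veq: "S (as!p) = S' (as!p)" by (rule mod_small_inj[OF v v', of p]) (use r r' in simp)
    have ge: "g c S = S (as!p := (S (as!p) + c) mod K)" by (simp add: g_def p_def)
    have ge': "g c S' = S' (as!p := (S' (as!p) + c) mod K)" by (simp add: g_def pp)
    show "S = S'"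
    proof
      fix b show "S b = S' b"
      proof (cases "b = as!p")
        case True then show ?thesis using veq by simp
      next
        case False
        then have "g c S b = S b" "g c S' b = S' b" using ge ge' by auto
        then show ?thesis using e by simp
      qed
    qed
  qed
  have le: "card (GG n q K as 0) \<le> card (GG n q K as c)" if c: "c < K" for c
  proof -
    have "card (GG n q K as 0) = card (g c ` GG n q K as 0)" using inj[OF c] by (simp add: card_image)
    also have "\<dots> \<le> card (GG n q K as c)"
    proof (rule card_mono)
      show "finite (GG n q K as c)" unfolding GG_def using finite_UU by simp
      show "g c ` GG n q K as 0 \<subseteq> GG n q K as c" using key[OF _ c] by blast
    qed
    finally show ?thesis .
  qed
  have "K * card (GG n q K as 0) = (\<Sum>c<K. card (GG n q K as 0))" by simp
  also have "\<dots> \<le> (\<Sum>c<K. card (GG n q K as c))" by (rule sum_mono) (use le in auto)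
  also have "\<dots> = card (\<Union>c<K. GG n q K as c)"
    by (rule card_UN_disjoint[symmetric]) (auto simp: GG_def finite_UU)
  also have "\<dots> \<le> card (UU n q)"
    by (rule card_mono) (auto simp: GG_def finite_UU)
  finally show ?thesis .
qed


lemma Z_card:
  assumes K: "1 \<le> K" "K < q" and d: "distinct as" and sub: "set as \<subseteq> {..<n}"
  shows "real (card {S \<in> UU n q. Qp K (map S as)})
         \<le> ((real (q-K) / real q) ^ length as + real K * real K / real q + 1 / real K) * real (card (UU n q))"
proof -
  define L where "L = length as"
  have Ln: "L \<le> n"
  proof -
    have "card (set as) \<le> card {..<n}" by (rule card_mono) (use sub in auto)
    then show ?thesis using d by (simp add: L_def distinct_card)
  qed
  define A1 where "A1 = {S \<in> UU n q. \<forall>i<length as. K \<le> S (as!i)}"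
  define A2 where "A2 = (\<Union>i\<in>{..<min K L}. {S \<in> UU n q. S (as!i) < K})"
  define G0 where "G0 = GG n q K as 0"
  have subZ: "{S \<in> UU n q. Qp K (map S as)} \<subseteq> A1 \<union> A2 \<union> G0"
  proof
    fix S assume S: "S \<in> {S \<in> UU n q. Qp K (map S as)}"
    then have SU: "S \<in> UU n q" and Q: "Qp K (map S as)" by auto
    show "S \<in> A1 \<union> A2 \<union> G0"
    proof (cases "\<forall>i<length as. K \<le> S (as!i)")
      case True then show ?thesis using SU by (simp add: A1_def)
    next
      case False
      then have ex: "\<exists>i<length (map S as). map S as ! i < K" by auto
      note mp = mpos_props[OF ex]
      show ?thesis
      proof (cases "mpos K (map S as) < K")
        case True
        define i where "i = mpos K (map S as)"
        have "i < min K L" using True mp by (simp add: i_def L_def)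
        moreover have "S (as!i) < K"
        proof -
          have "i < length as" "map S as ! i < K" using mp unfolding i_def by auto
          then show ?thesis by simp
        qed
        ultimately show ?thesis using SU unfolding A2_def by blast
      next
        case False
        then have "(mpos K (map S as) + map S as ! mpos K (map S as)) mod K = 0"
          using Q ex unfolding Qp_def by auto
        then show ?thesis using SU ex unfolding G0_def GG_def by blast
      qed
    qed
  qed
  have fin: "finite A1" "finite A2" "finite G0"
    unfolding A1_def A2_def G0_def GG_def using finite_UU by auto
  have qpos: "real q > 0" using K by simp
  have cU: "real (card (UU n q)) = real q ^ n" by (simp add: card_UU)
  have c1: "real (card A1) = (real (q-K) / real q) ^ L * real (card (UU n q))"
  proof -
    have "card A1 = (q-K) ^ L * q ^ (n - L)"
      unfolding A1_def L_def by (rule A1_card) (use d sub K in auto)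
    then have "real (card A1) = real (q-K) ^ L * real q ^ (n - L)" by simp
    also have "\<dots> = (real (q-K) / real q) ^ L * (real q ^ L * real q ^ (n - L))"
      using qpos by (simp add: power_divide)
    also have "real q ^ L * real q ^ (n - L) = real q ^ n" using Ln by (simp flip: power_add)
    finally show ?thesis using cU by simp
  qed
  have c2: "real (card A2) \<le> real K * real K / real q * real (card (UU n q))"
  proof (cases "L = 0")
    case True then show ?thesis by (simp add: A2_def)
  next
    case False
    then have n1: "n \<ge> 1" using Ln by simp
    have "card A2 \<le> (\<Sum>i<min K L. card {S \<in> UU n q. S (as!i) < K})"
      unfolding A2_def by (rule card_UN_le) simp
    also have "\<dots> \<le> (\<Sum>i<min K L. K * q ^ (n - 1))"
    proof (rule sum_mono)
      fix i assume "i \<in> {..<min K L}"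
      then have "as!i < n" using sub L_def nth_mem by fastforce
      then show "card {S \<in> UU n q. S (as!i) < K} \<le> K * q ^ (n - 1)" by (rule B_card2)
    qed
    also have "\<dots> \<le> K * (K * q ^ (n - 1))" by (simp add: min_def)
    finally have "real (card A2) \<le> real K * real K * real q ^ (n - 1)"
      by (metis (mono_tags, lifting) mult.assoc of_nat_le_iff of_nat_mult of_nat_power)
    also have "\<dots> = real K * real K / real q * real q ^ n"
      using qpos n1 by (simp add: power_eq_if)
    finally show ?thesis using cU by simp
  qed
  have c3: "real (card G0) \<le> 1 / real K * real (card (UU n q))"
  proof -
    have "K * card G0 \<le> card (UU n q)" unfolding G0_def
      by (rule GG_card) (use K d sub in auto)
    then have "real K * real (card G0) \<le> real (card (UU n q))" by (metis of_nat_le_iff of_nat_mult)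
    then show ?thesis using K by (simp add: field_simps)
  qed
  have "card {S \<in> UU n q. Qp K (map S as)} \<le> card (A1 \<union> A2 \<union> G0)"
    by (rule card_mono) (use fin subZ in auto)
  also have "\<dots> \<le> card A1 + card A2 + card G0"
    by (meson add_mono card_Un_le le_trans order_refl)
  finally have "real (card {S \<in> UU n q. Qp K (map S as)}) \<le> real (card A1) + real (card A2) + real (card G0)"
    by linarith
  also have "\<dots> \<le> ((real (q-K) / real q) ^ length as + real K * real K / real q + 1 / real K) * real (card (UU n q))"
    using c1 c2 c3 by (simp add: L_def distrib_right)
  finally show ?thesis .
qed


lemma pre_card:
  assumes m: "m > 0" and fT: "finite T"
  shows "card {y \<in> {0..<N}. y mod m \<in> T} \<le> (N div m + 1) * card T"
proof -
  have "{y \<in> {0..<N}. y mod m \<in> T} \<subseteq> (\<lambda>(a, r). a * m + r) ` ({..N div m} \<times> T)"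
  proof
    fix y assume y: "y \<in> {y \<in> {0..<N}. y mod m \<in> T}"
    have "y = (y div m) * m + y mod m" by simp
    moreover have "y div m \<le> N div m" using y by (simp add: div_le_mono)
    ultimately show "y \<in> (\<lambda>(a, r). a * m + r) ` ({..N div m} \<times> T)"
      using y by (intro image_eqI[of _ _ "(y div m, y mod m)"]) auto
  qed
  then have "card {y \<in> {0..<N}. y mod m \<in> T} \<le> card ((\<lambda>(a, r). a * m + r) ` ({..N div m} \<times> T))"
    by (rule card_mono[rotated]) (use fT in simp)
  also have "\<dots> \<le> card ({..N div m} \<times> T)" by (rule card_image_le) (use fT in simp)
  also have "\<dots> = (N div m + 1) * card T" by (simp add: card_cartesian_product)
  finally show ?thesis .
qed

lemma sorted_window:
  assumes "sorted hs" "distinct hs"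
  shows "sorted_list_of_set (set (take L (drop l hs))) = take L (drop l hs)"
proof -
  have "sorted (take L (drop l hs))" "distinct (take L (drop l hs))"
    using assms by (auto simp: sorted_wrt_take sorted_wrt_drop)
  then show ?thesis by (simp add: sorted_list_of_set_sort_remdups distinct_remdups_id sorted_sort_id)
qed


theorem corollary2p10:
  fixes \<delta> :: real and k j :: nat
  assumes "\<delta> > 0" and "k \<ge> 1"
  shows "\<exists>N0. \<forall>N \<ge> N0. \<forall>\<A> :: nat \<Rightarrow> nat set set.
           (\<forall>j'<j. \<A> j' \<subseteq> Pow {0..<N} \<and> k_large k N (\<A> j') \<and> upward_closed N (\<A> j'))
           \<longrightarrow> (\<exists>Z. Z \<subseteq> {0..<N} \<and> real (card Z) < (1 / real k + \<delta>) * real N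
                     \<and> (\<forall>j'<j. Z \<in> \<A> j'))"
proof (cases "j = 0")
  case True
  show ?thesis
  proof (intro exI[of _ 1] allI impI)
    fix N :: nat and \<A> :: "nat \<Rightarrow> nat set set" assume "1 \<le> N"
    then have "0 < (1 / real k + \<delta>) * real N" using assms by (simp add: add_pos_nonneg)
    then show "\<exists>Z. Z \<subseteq> {0..<N} \<and> real (card Z) < (1 / real k + \<delta>) * real N \<and> (\<forall>j'<j. Z \<in> \<A> j')"
      using True by (intro exI[of _ "{}"]) simp
  qed
next
  case False
  define K where "K = k"
  have K1: "K \<ge> 1" using assms K_def by simp
  have d: "\<delta> > 0" using assms by simp
  obtain q0 :: nat where q0: "8 * real K * real K / \<delta> < real q0" using reals_Archimedean2 by blast
  define q where "q = q0 + K + 1"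
  have Kq: "K < q" by (simp add: q_def)
  have qpos: "real q > 0" using Kq by simp
  have qb: "real K * real K / real q < \<delta> / 8"
  proof -
    have "8 * real K * real K / \<delta> < real q" using q0 by (simp add: q_def)
    then have "8 * real K * real K < \<delta> * real q" using d by (simp add: field_simps)
    then show ?thesis using qpos by (simp add: field_simps)
  qed
  define \<rho> where "\<rho> = real (q - K) / real q"
  have \<rho>1: "\<rho> < 1" using Kq K1 qpos by (simp add: \<rho>_def field_simps)
  obtain L where L: "\<rho> ^ L < \<delta> / 8" using real_arch_pow_inv[of "\<delta>/8" \<rho>] d \<rho>1 by auto
  define M where "M = L + K - 1"
  obtain n :: nat where ram: "partn_lst {..<n} (replicate j M) L" using ramsey_full[of "replicate j M" L] by blast
  define U where "U = UU n q"
  define m where "m = card U"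
  have mpos: "m > 0" using Kq by (simp add: m_def U_def card_UU)
  obtain e where e: "bij_betw e {0..<m} U" using ex_bij_betw_nat_finite[of U] finite_UU
    unfolding m_def U_def by blast
  obtain N0 :: nat where N0: "2 * real m / \<delta> < real N0" using reals_Archimedean2 by blast
  define Zs where "Zs as = {S \<in> U. Qp K (map S as)}" for as
  show ?thesis
  proof (intro exI[of _ N0] allI impI)
    fix N :: nat and \<A> :: "nat \<Rightarrow> nat set set"
    assume NN: "N0 \<le> N"
    assume As: "\<forall>j'<j. \<A> j' \<subseteq> Pow {0..<N} \<and> k_large k N (\<A> j') \<and> upward_closed N (\<A> j')"
    define Y where "Y x = {y \<in> {0..<N}. e (y mod m) \<in> Zs (sorted_list_of_set x)}" for x
    have Nm: "2 * real m < \<delta> * real N"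
    proof -
      have "2 * real m < \<delta> * real N0" using N0 d by (simp add: field_simps)
      also have "\<dots> \<le> \<delta> * real N" using NN d by simp
      finally show ?thesis .
    qed
    have cardY: "real (card (Y x)) < (1 / real k + \<delta>) * real N" if x: "x \<in> nsets {..<n} L" for x
    proof -
      define as where "as = sorted_list_of_set x"
      have fx: "finite x" and xs: "x \<subseteq> {..<n}" and cx: "card x = L" using x by (auto simp: nsets_def)
      have das: "distinct as" and sas: "set as \<subseteq> {..<n}" and las: "length as = L"
        using fx xs cx by (auto simp: as_def)
      have cz0: "real (card (Zs as)) \<le> (\<rho> ^ length as + real K * real K / real q + 1 / real K) * real (card U)"
        using Z_card[OF K1 Kq das sas] unfolding Zs_def U_def \<rho>_def .
      have cz: "real (card (Zs as)) \<le> (\<rho> ^ L + real K * real K / real q + 1 / real K) * real m"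
        using cz0 unfolding las m_def .
      also have "\<dots> \<le> (1 / real K + \<delta> / 4) * real m"
      proof (rule mult_right_mono)
        show "\<rho> ^ L + real K * real K / real q + 1 / real K \<le> 1 / real K + \<delta> / 4"
          using L qb by linarith
      qed simp
      finally have cz2: "real (card (Zs as)) \<le> (1 / real K + \<delta> / 4) * real m" .
      define T where "T = {r \<in> {0..<m}. e r \<in> Zs as}"
      have fT: "finite T" unfolding T_def by (rule finite_subset[of _ "{0..<m}"]) auto
      have cT: "card T \<le> card (Zs as)"
      proof -
        have Tsub: "T \<subseteq> {0..<m}" unfolding T_def by blast
        have "inj_on e {0..<m}" using e by (simp add: bij_betw_def)
        then have "inj_on e T" using Tsub by (rule inj_on_subset)
        then have "card T = card (e ` T)" by (simp add: card_image)
        also have "\<dots> \<le> card (Zs as)"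
          by (rule card_mono) (auto simp: T_def Zs_def U_def finite_UU)
        finally show ?thesis .
      qed
      have cTm: "card T \<le> m"
      proof -
        have "T \<subseteq> {0..<m}" unfolding T_def by blast
        then have "card T \<le> card {0..<m}" by (intro card_mono) auto
        then show ?thesis by simp
      qed
      have YT: "Y x = {y \<in> {0..<N}. y mod m \<in> T}"
        using mpos by (auto simp: Y_def T_def as_def)
      have "card (Y x) \<le> (N div m + 1) * card T" unfolding YT by (rule pre_card[OF mpos fT])
      then have "real (card (Y x)) \<le> (real (N div m) + 1) * real (card T)"
        by (metis of_nat_1 of_nat_add of_nat_le_iff of_nat_mult)
      also have "\<dots> = real (N div m) * real (card T) + real (card T)" by (simp add: algebra_simps)
      also have "\<dots> \<le> real N / real m * ((1 / real K + \<delta> / 4) * real m) + real m"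
      proof -
        have "real (N div m) \<le> real N / real m" by (rule of_nat_div_le_of_nat)
        moreover have "real (card T) \<le> (1 / real K + \<delta> / 4) * real m" using cT cz2 by linarith
        ultimately have "real (N div m) * real (card T) \<le> real N / real m * ((1 / real K + \<delta> / 4) * real m)"
          by (intro mult_mono) auto
        then show ?thesis using cTm by linarith
      qed
      also have "\<dots> = (1 / real K + \<delta> / 4) * real N + real m" using mpos by (simp add: field_simps)
      also have "\<dots> < (1 / real k + \<delta>) * real N" using Nm K_def by (simp add: algebra_simps)
      finally show ?thesis .
    qed
    have ex: "\<exists>x \<in> nsets {..<n} L. \<forall>i<j. Y x \<in> \<A> i"
    proof (rule ccontr)
      assume H0: "\<not> ?thesis"
      then have H1: "\<exists>i<j. Y x \<notin> \<A> i" if "x \<in> nsets {..<n} L" for x using that by blast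
      define f where "f x = (LEAST i. i < j \<and> Y x \<notin> \<A> i)" for x
      have fprop: "f x < j \<and> Y x \<notin> \<A> (f x)" if "x \<in> nsets {..<n} L" for x
        unfolding f_def by (rule LeastI_ex) (rule H1[OF that])
      have fF: "f \<in> nsets {..<n} L \<rightarrow> {..<j}" using fprop by auto
      obtain i H where i: "i < length (replicate j M)" and H: "H \<in> nsets {..<n} (replicate j M ! i)"
        and fH: "f ` (nsets H L) \<subseteq> {i}"
        using partn_lstE[OF ram fF] by auto
      have ij: "i < j" using i by simp
      have Hn: "H \<subseteq> {..<n}" and finH: "finite H" and cH: "card H = M" using H ij by (auto simp: nsets_def)
      define hs where "hs = sorted_list_of_set H"
      have hs: "sorted hs" "distinct hs" "length hs = M" "set hs = H" using finH cH by (auto simp: hs_def)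
      define xw where "xw l = set (take L (drop l hs))" for l
      have xwH: "xw l \<in> nsets H L" if "l < K" for l
      proof -
        have "length (take L (drop l hs)) = L" using hs(3) that by (simp add: M_def)
        then have "card (xw l) = L" using hs(2) by (simp add: xw_def distinct_card)
        moreover have "xw l \<subseteq> H" using hs(4) unfolding xw_def by (meson set_drop_subset set_take_subset subset_trans)
        ultimately show ?thesis by (simp add: nsets_def xw_def)
      qed
      have xwn: "xw l \<in> nsets {..<n} L" if "l < K" for l
        using xwH[OF that] Hn nsets_mono by blast
      have Ynot: "Y (xw l) \<notin> \<A> i" if "l < K" for l
      proof -
        have "f (xw l) = i" using fH xwH[OF that] by blast
        then show ?thesis using fprop[OF xwn[OF that]] by simp
      qed
      have sw: "sorted_list_of_set (xw l) = take L (drop l hs)" for l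
        unfolding xw_def by (rule sorted_window[OF hs(1) hs(2)])
      define c where "c y = (LEAST l. l < K \<and> e (y mod m) \<in> Zs (take L (drop l hs)))" for y
      have cprop: "c y < K \<and> e (y mod m) \<in> Zs (take L (drop (c y) hs))" if y: "y < N" for y
      proof -
        have SU: "e (y mod m) \<in> U" using e mpos by (auto simp: bij_betw_def)
        define W where "W = map (e (y mod m)) hs"
        have "length W = L + K - 1" using hs(3) by (simp add: W_def M_def)
        then obtain l where l: "l < K" "Qp K (take L (drop l W))" using word_cover[OF K1] by blast
        have "Qp K (map (e (y mod m)) (take L (drop l hs)))" using l(2) by (simp add: W_def take_map drop_map)
        then have "l < K \<and> e (y mod m) \<in> Zs (take L (drop l hs))" using l(1) SU by (simp add: Zs_def)
        then show ?thesis unfolding c_def by (rule LeastI)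
      qed
      have kl: "k_large k N (\<A> i)" and uc: "upward_closed N (\<A> i)" using As ij by auto
      have "\<forall>y<N. c y < k" using cprop K_def by blast
      then obtain l where l: "l < k" and Pl: "{y \<in> {0..<N}. c y = l} \<in> \<A> i"
        using kl unfolding k_large_def by blast
      have lK: "l < K" using l K_def by simp
      have sub1: "{y \<in> {0..<N}. c y = l} \<subseteq> Y (xw l)"
        using cprop unfolding Y_def sw by auto
      have sub2: "Y (xw l) \<subseteq> {0..<N}" by (auto simp: Y_def)
      have "Y (xw l) \<in> \<A> i" using uc Pl sub1 sub2 unfolding upward_closed_def by blast
      then show False using Ynot[OF lK] by simp
    qed
    then obtain x where x: "x \<in> nsets {..<n} L" and xA: "\<forall>i<j. Y x \<in> \<A> i" by blast
    show "\<exists>Z. Z \<subseteq> {0..<N} \<and> real (card Z) < (1 / real k + \<delta>) * real N \<and> (\<forall>j'<j. Z \<in> \<A> j')"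
    proof -
      have "Y x \<subseteq> {0..<N}" unfolding Y_def by blast
      then show ?thesis using cardY[OF x] xA by blast
    qed
  qed
qed

end
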